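(* Let $p\in(0,1)$ and let $X,\gamma$ satisfy the standing assumptions in the context. The problem of minimizing $\mathrm{ES}_p(g(X))$ over $g\in\mathcal G_{\rm cm}$ admits a solution if and only if $\mathrm{ess\text{-}sup}\,\gamma\le\frac1{1-p}$; and if $\mathrm{ess\text{-}sup}\,\gamma\le\frac1{1-p}$, the constant function $g_X(\cdot)=x_0$ is a solution.
   Context: $(\Omega,\mathcal F,\mathbb P)$ is atomless. $\mathrm{VaR}_p(Y)=\inf\{x:\mathbb P(Y\le x)\ge p\}$, $\mathrm{ES}_p(Y)=\frac1{1-p}\int_p^1\mathrm{VaR}_u(Y)\,\mathrm du$. Standing assumptions: $X\ge0$ is a random variable whose distribution has a positive density on its support; $\gamma:\mathbb R\to\mathbb R$ is continuous and strictly positive; $\gamma$ also denotes $\gamma(X)$; $\mathbb E[\gamma]=1$, $\mathbb E[\gamma X]<\infty$. With $\mathcal G_1$ the measurable functions $\mathbb R\to\mathbb R$ and $x_0\in\mathbb R$, $\mathcal G_{\rm cm}=\{g\in\mathcal G_1:\mathbb E[\gamma g(X)]\ge x_0\}$. *)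

theory Defs
  imports "HOL-Probability.Probability"
begin

definition atomless :: "'a measure \<Rightarrow> bool" where
  "atomless M \<longleftrightarrow> (\<forall>A\<in>sets M. measure M A > 0 \<longrightarrow>
     (\<exists>B\<in>sets M. B \<subseteq> A \<and> 0 < measure M B \<and> measure M B < measure M A))"

definition VaR :: "'a measure \<Rightarrow> real \<Rightarrow> ('a \<Rightarrow> real) \<Rightarrow> real" where
  "VaR M p Y = Inf {x. measure M {\<omega>\<in>space M. Y \<omega> \<le> x} \<ge> p}"

text \<open>Expected Shortfall ES_p(Y) = 1/(1-p) \<integral>_p^1 VaR_u(Y) du, with values in
  (-\<infinity>,+\<infinity>]: since u \<mapsto> VaR_u(Y) is bounded below on [p,1), a non-integrable
  integrand means the integral is +\<infinity>.\<close>
definition ES :: "'a measure \<Rightarrow> real \<Rightarrow> ('a \<Rightarrow> real) \<Rightarrow> ereal" where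
  "ES M p Y = (if set_integrable lborel {p<..<1} (\<lambda>u. VaR M u Y)
               then ereal ((1 / (1 - p)) * (LINT u:{p<..<1}|lborel. VaR M u Y))
               else \<infinity>)"

definition ext_expect :: "'a measure \<Rightarrow> ('a \<Rightarrow> real) \<Rightarrow> ereal" where
  "ext_expect M f = enn2ereal (\<integral>\<^sup>+ \<omega>. ennreal (f \<omega>) \<partial>M)
                  - enn2ereal (\<integral>\<^sup>+ \<omega>. ennreal (- f \<omega>) \<partial>M)"

definition expect_defined :: "'a measure \<Rightarrow> ('a \<Rightarrow> real) \<Rightarrow> bool" where
  "expect_defined M f \<longleftrightarrow>
     f \<in> borel_measurable M \<and>
     \<not> ((\<integral>\<^sup>+ \<omega>. ennreal (f \<omega>) \<partial>M) = \<infinity> \<and> (\<integral>\<^sup>+ \<omega>. ennreal (- f \<omega>) \<partial>M) = \<infinity>)"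

definition G_cm :: "'a measure \<Rightarrow> ('a \<Rightarrow> real) \<Rightarrow> (real \<Rightarrow> real) \<Rightarrow> real \<Rightarrow> (real \<Rightarrow> real) set" where
  "G_cm M X \<gamma> x0 = {g. g \<in> borel_measurable borel \<and>
      expect_defined M (\<lambda>\<omega>. \<gamma> (X \<omega>) * g (X \<omega>)) \<and>
      ext_expect M (\<lambda>\<omega>. \<gamma> (X \<omega>) * g (X \<omega>)) \<ge> ereal x0}"

definition dist_support :: "'a measure \<Rightarrow> ('a \<Rightarrow> real) \<Rightarrow> real set" where
  "dist_support M X = {x. \<forall>e>0. measure M {\<omega>\<in>space M. X \<omega> \<in> ball x e} > 0}"

definition is_ES_minimizer ::
  "'a measure \<Rightarrow> real \<Rightarrow> ('a \<Rightarrow> real) \<Rightarrow> (real \<Rightarrow> real) \<Rightarrow> real \<Rightarrow> (real \<Rightarrow> real) \<Rightarrow> bool" where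
  "is_ES_minimizer M p X \<gamma> x0 g \<longleftrightarrow> g \<in> G_cm M X \<gamma> x0 \<and>
     (\<forall>h\<in>G_cm M X \<gamma> x0. ES M p (\<lambda>\<omega>. g (X \<omega>)) \<le> ES M p (\<lambda>\<omega>. h (X \<omega>)))"

end

theory Submission
  imports Defs
begin

lemma VaR_eq_I:
  assumes "prob_space M" "Y \<in> borel_measurable M"
  shows "VaR M u Y = Inf {x. u \<le> cdf (distr M borel Y) x}"
proof -
  have "cdf (distr M borel Y) x = measure M {\<omega>\<in>space M. Y \<omega> \<le> x}" for x
    unfolding cdf_def using assms(2) by (subst measure_distr) (auto intro!: arg_cong2[where f=measure])
  then show ?thesis unfolding VaR_def by simp
qed

lemma cdf_distr_eq:
  assumes "Y \<in> borel_measurable M"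
  shows "cdf (distr M borel Y) x = measure M {\<omega>\<in>space M. Y \<omega> \<le> x}"
    unfolding cdf_def using assms by (subst measure_distr) (auto intro!: arg_cong2[where f=measure])

lemma VaR_le_iff:
  assumes "prob_space M" "Y \<in> borel_measurable M" "0 < u" "u < 1"
  shows "VaR M u Y \<le> x \<longleftrightarrow> u \<le> measure M {\<omega>\<in>space M. Y \<omega> \<le> x}"
proof -
  interpret P: prob_space M by fact
  interpret N: cdf_distribution "distr M borel Y"
    unfolding cdf_distribution_def using assms by auto
  show ?thesis using N.pseudoinverse[of u x] assms
    by (simp add: VaR_eq_I cdf_distr_eq)
qed

lemma VaR_distr:
  assumes "prob_space M" "Y \<in> borel_measurable M"
  shows "distr (restrict_space lborel {0<..<1}) borel (\<lambda>u. VaR M u Y) = distr M borel Y"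
    and "(\<lambda>u. VaR M u Y) \<in> borel_measurable (restrict_space lborel {0<..<1::real})"
proof -
  interpret P: prob_space M by fact
  interpret N: cdf_distribution "distr M borel Y"
    unfolding cdf_distribution_def using assms by auto
  have e: "(\<lambda>u. VaR M u Y) = N.I" using VaR_eq_I[OF assms] by auto
  show "distr (restrict_space lborel {0<..<1}) borel (\<lambda>u. VaR M u Y) = distr M borel Y"
    unfolding e by (rule N.distr_I_eq_M)
  show "(\<lambda>u. VaR M u Y) \<in> borel_measurable (restrict_space lborel {0<..<1::real})"
    unfolding e using N.measurable_CI
    by (subst measurable_cong_sets[OF sets_restrict_space_cong[OF sets_lborel] refl]) 
qed

lemma nn_VaR:
  assumes "prob_space M" "Y \<in> borel_measurable M" "f \<in> borel_measurable borel"
  shows "(\<integral>\<^sup>+\<omega>. f (Y \<omega>) \<partial>M) = (\<integral>\<^sup>+u. f (VaR M u Y) * indicator {0<..<1} u \<partial>lborel)"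
proof -
  have "(\<integral>\<^sup>+\<omega>. f (Y \<omega>) \<partial>M) = (\<integral>\<^sup>+x. f x \<partial>distr M borel Y)"
    using assms by (simp add: nn_integral_distr)
  also have "\<dots> = (\<integral>\<^sup>+x. f x \<partial>distr (restrict_space lborel {0<..<1}) borel (\<lambda>u. VaR M u Y))"
    using VaR_distr(1)[OF assms(1,2)] by simp
  also have "\<dots> = (\<integral>\<^sup>+u. f (VaR M u Y) \<partial>restrict_space lborel {0<..<1})"
    using assms VaR_distr(2)[OF assms(1,2)] by (simp add: nn_integral_distr)
  also have "\<dots> = (\<integral>\<^sup>+u. f (VaR M u Y) * indicator {0<..<1} u \<partial>lborel)"
    by (subst nn_integral_restrict_space) auto
  finally show ?thesis .
qed

lemma set_integrable_bdd:
  assumes "set_borel_measurable lborel {a<..<b} f" "\<And>u. u\<in>{a<..<b} \<Longrightarrow> \<bar>f u\<bar> \<le> B"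
  shows "set_integrable lborel {a<..<b::real} (f :: real \<Rightarrow> real)"
  unfolding set_integrable_def
proof (rule integrableI_bounded_set[where A="{a<..<b}" and B=B])
  show "(\<lambda>x. indicator {a<..<b} x *\<^sub>R f x) \<in> borel_measurable lborel"
    using assms(1) by (simp add: set_borel_measurable_def)
  show "emeasure lborel {a<..<b} < \<infinity>"
    by (cases "a \<le> b") auto
  show "AE x in lborel. x \<in> {a<..<b} \<longrightarrow> norm (indicator {a<..<b} x *\<^sub>R f x) \<le> B"
    using assms(2) by auto
  show "AE x in lborel. x \<notin> {a<..<b} \<longrightarrow> indicator {a<..<b} x *\<^sub>R f x = 0"
    by auto
qed auto

lemma VaR_set_meas:
  assumes "prob_space M" "Y \<in> borel_measurable M" "0 \<le> p"
  shows "set_borel_measurable lborel {p<..<1} (\<lambda>u. VaR M u Y)"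
proof -
  have "(\<lambda>u. VaR M u Y) \<in> borel_measurable (restrict_space lborel {p<..<1::real})"
    by (rule measurable_restrict_mono[OF VaR_distr(2)[OF assms(1,2)]]) (use assms in auto)
  then show ?thesis unfolding set_borel_measurable_def
    by (subst (asm) borel_measurable_restrict_space_iff) auto
qed

lemma VaR_mono_facts:
  assumes "prob_space M" "Y \<in> borel_measurable M" "0 < p" "p < 1"
  shows "\<And>u. 0 < u \<Longrightarrow> u \<le> p \<Longrightarrow> VaR M u Y \<le> VaR M p Y"
    and "\<And>u. p \<le> u \<Longrightarrow> u < 1 \<Longrightarrow> VaR M p Y \<le> VaR M u Y"
proof -
  fix u assume u: "0 < u" "u \<le> p"
  have "p \<le> measure M {\<omega>\<in>space M. Y \<omega> \<le> VaR M p Y}"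
    using VaR_le_iff[OF assms(1,2,3,4), of "VaR M p Y"] by simp
  then show "VaR M u Y \<le> VaR M p Y"
    using VaR_le_iff[OF assms(1,2) u(1)] u assms by simp
next
  fix u assume u: "p \<le> u" "u < 1"
  have "u \<le> measure M {\<omega>\<in>space M. Y \<omega> \<le> VaR M u Y}"
    using VaR_le_iff[OF assms(1,2) _ u(2), of "VaR M u Y"] u assms by simp
  then show "VaR M p Y \<le> VaR M u Y"
    using VaR_le_iff[OF assms(1,2,3,4), of "VaR M u Y"] u by simp
qed

lemma ES_key:
  assumes "prob_space M" "Y \<in> borel_measurable M" "0 < p" "p < 1"
    and int: "set_integrable lborel {p<..<1} (\<lambda>u. VaR M u Y)"
  shows "(\<integral>\<^sup>+\<omega>. ennreal (Y \<omega> - VaR M p Y) \<partial>M)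
           = ennreal ((LINT u:{p<..<1}|lborel. VaR M u Y) - (1-p) * VaR M p Y)"
    and "(1-p) * VaR M p Y \<le> (LINT u:{p<..<1}|lborel. VaR M u Y)"
proof -
  define q where "q = VaR M p Y"
  have ci: "set_integrable lborel {p<..<1} (\<lambda>u. q)"
    by (rule set_integrable_bdd[where B="\<bar>q\<bar>"]) (auto simp: set_borel_measurable_def)
  have cI: "(LINT u:{p<..<1}|lborel. q) = (1-p) * q"
    using assms by (subst set_integral_const) auto
  have di: "set_integrable lborel {p<..<1} (\<lambda>u. VaR M u Y - q)"
    using int ci by auto
  have dI: "(LINT u:{p<..<1}|lborel. VaR M u Y - q) = (LINT u:{p<..<1}|lborel. VaR M u Y) - (1-p) * q"
    using int ci cI by (subst set_integral_diff(2)) auto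
  have "(\<integral>\<^sup>+\<omega>. ennreal (Y \<omega> - q) \<partial>M) = (\<integral>\<^sup>+u. ennreal (VaR M u Y - q) * indicator {0<..<1} u \<partial>lborel)"
    using nn_VaR[OF assms(1,2), of "\<lambda>x. ennreal (x - q)"] by simp
  also have "\<dots> = (\<integral>\<^sup>+u. ennreal (indicator {p<..<1} u * (VaR M u Y - q)) \<partial>lborel)"
  proof (rule nn_integral_cong)
    fix u :: real
    show "ennreal (VaR M u Y - q) * indicator {0<..<1} u = ennreal (indicator {p<..<1} u * (VaR M u Y - q))"
    proof (cases "0 < u \<and> u \<le> p")
      case True
      then show ?thesis using VaR_mono_facts(1)[OF assms(1-4), of u] assms
        by (auto simp: q_def indicator_def ennreal_eq_0_iff)
    qed (use assms in \<open>auto simp: indicator_def\<close>)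
  qed
  also have "\<dots> = ennreal (LINT u:{p<..<1}|lborel. VaR M u Y - q)"
    unfolding set_lebesgue_integral_def real_scaleR_def
    apply (rule nn_integral_eq_integral)
    using di apply (simp add: set_integrable_def)
    using VaR_mono_facts(2)[OF assms(1-4)] by (auto simp: q_def indicator_def)
  finally show "(\<integral>\<^sup>+\<omega>. ennreal (Y \<omega> - VaR M p Y) \<partial>M)
           = ennreal ((LINT u:{p<..<1}|lborel. VaR M u Y) - (1-p) * VaR M p Y)"
    using dI by (simp add: q_def)
  have "0 \<le> (LINT u:{p<..<1}|lborel. VaR M u Y - q)"
    unfolding set_lebesgue_integral_def
    by (rule integral_nonneg_AE) (use VaR_mono_facts(2)[OF assms(1-4)] in \<open>auto simp: q_def indicator_def\<close>)
  then show "(1-p) * VaR M p Y \<le> (LINT u:{p<..<1}|lborel. VaR M u Y)"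
    using dI by (simp add: q_def)
qed

lemma ext_expect_integrable:
  assumes "integrable M f"
  shows "ext_expect M f = ereal (integral\<^sup>L M f)"
proof -
  have fin: "(\<integral>\<^sup>+x. ennreal (norm (f x)) \<partial>M) < \<infinity>" using assms by (simp add: integrable_iff_bounded)
  have "(\<integral>\<^sup>+x. ennreal (f x) \<partial>M) \<le> (\<integral>\<^sup>+x. ennreal (norm (f x)) \<partial>M)"
    by (intro nn_integral_mono) (auto intro: ennreal_leI)
  with fin have a: "(\<integral>\<^sup>+x. ennreal (f x) \<partial>M) < \<infinity>" by auto
  have "(\<integral>\<^sup>+x. ennreal (- f x) \<partial>M) \<le> (\<integral>\<^sup>+x. ennreal (norm (f x)) \<partial>M)"
    by (intro nn_integral_mono) (auto intro: ennreal_leI)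
  with fin have b: "(\<integral>\<^sup>+x. ennreal (- f x) \<partial>M) < \<infinity>" by auto
  obtain A where A: "(\<integral>\<^sup>+x. ennreal (f x) \<partial>M) = ennreal A" "0 \<le> A" using a
    by (cases "(\<integral>\<^sup>+x. ennreal (f x) \<partial>M)") auto
  obtain B where B: "(\<integral>\<^sup>+x. ennreal (- f x) \<partial>M) = ennreal B" "0 \<le> B" using b
    by (cases "(\<integral>\<^sup>+x. ennreal (- f x) \<partial>M)") auto
  show ?thesis unfolding ext_expect_def real_lebesgue_integral_def[OF assms] A B
    using A(2) B(2) by simp
qed

lemma ennreal_abs_split: "ennreal \<bar>x::real\<bar> = ennreal x + ennreal (- x)"
  by (cases "x \<ge> 0") (auto simp: ennreal_neg)

lemma ES_ge:
  fixes \<phi> Y :: "'a \<Rightarrow> real"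
  assumes P: "prob_space M" and Ym: "Y \<in> borel_measurable M" and \<phi>m: "\<phi> \<in> borel_measurable M"
    and p: "0 < p" "p < 1"
    and le: "AE \<omega> in M. \<phi> \<omega> \<le> 1/(1-p)" and nn: "\<forall>\<omega>\<in>space M. 0 \<le> \<phi> \<omega>"
    and \<phi>i: "integrable M \<phi>" and \<phi>1: "integral\<^sup>L M \<phi> = 1"
    and x0: "ereal x0 \<le> ext_expect M (\<lambda>\<omega>. \<phi> \<omega> * Y \<omega>)"
  shows "ereal x0 \<le> ES M p Y"
proof (cases "set_integrable lborel {p<..<1} (\<lambda>u. VaR M u Y)")
  case False
  then show ?thesis by (simp add: ES_def)
next
  case True
  interpret prob_space M by fact
  note [measurable] = Ym \<phi>m
  define q where "q = VaR M p Y"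
  define J where "J = (LINT u:{p<..<1}|lborel. VaR M u Y)"
  define c where "c = 1/(1-p)"
  have c1: "c * (1-p) = 1" using p by (simp add: c_def)
  have c0: "0 \<le> c" using p by (simp add: c_def)
  define Z where "Z = (\<lambda>\<omega>. max 0 (Y \<omega> - q))"
  have Zm[measurable]: "Z \<in> borel_measurable M" unfolding Z_def using Ym by measurable
  have key: "(\<integral>\<^sup>+\<omega>. ennreal (Y \<omega> - q) \<partial>M) = ennreal (J - (1-p) * q)"
    using ES_key(1)[OF P Ym p True] by (simp add: q_def J_def)
  have key2: "(1-p) * q \<le> J" using ES_key(2)[OF P Ym p True] by (simp add: q_def J_def)
  have Zn: "(\<integral>\<^sup>+\<omega>. ennreal (Z \<omega>) \<partial>M) = ennreal (J - (1-p) * q)"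
    unfolding Z_def using key by (simp add: ennreal_max_0)
  have Zi: "integrable M Z"
    by (rule integrableI_nonneg[OF Zm]) (auto simp: Zn, simp add: Z_def)
  have ZI: "integral\<^sup>L M Z = J - (1-p) * q"
  proof -
    have "ennreal (integral\<^sup>L M Z) = ennreal (J - (1-p) * q)"
      using nn_integral_eq_integral[OF Zi] Zn by (simp add: Z_def)
    moreover have "0 \<le> integral\<^sup>L M Z" by (rule integral_nonneg_AE) (auto simp: Z_def)
    ultimately show ?thesis using key2 by simp
  qed
  have pt: "AE \<omega> in M. \<phi> \<omega> * Y \<omega> \<le> \<phi> \<omega> * q + c * Z \<omega>"
    using le AE_space
  proof eventually_elim
    case (elim \<omega>)
    have f0: "0 \<le> \<phi> \<omega>" using nn elim by auto
    have "\<phi> \<omega> * (Y \<omega> - q) \<le> \<phi> \<omega> * Z \<omega>" by (rule mult_left_mono) (use f0 in \<open>auto simp: Z_def\<close>)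
    moreover have "\<phi> \<omega> * Z \<omega> \<le> c * Z \<omega>" by (rule mult_right_mono) (use elim in \<open>auto simp: Z_def c_def\<close>)
    ultimately show ?case by (simp add: algebra_simps)
  qed
  have pt2: "AE \<omega> in M. \<phi> \<omega> * Y \<omega> \<le> \<phi> \<omega> * \<bar>q\<bar> + c * Z \<omega>"
    using pt AE_space
  proof eventually_elim
    case (elim \<omega>)
    have "\<phi> \<omega> * q \<le> \<phi> \<omega> * \<bar>q\<bar>" by (rule mult_left_mono) (use nn elim in auto)
    then show ?case using elim by linarith
  qed
  have bi: "integrable M (\<lambda>\<omega>. \<phi> \<omega> * \<bar>q\<bar> + c * Z \<omega>)" using \<phi>i Zi by auto
  have pf: "(\<integral>\<^sup>+\<omega>. ennreal (\<phi> \<omega> * Y \<omega>) \<partial>M) < \<infinity>"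
  proof -
    have "(\<integral>\<^sup>+\<omega>. ennreal (\<phi> \<omega> * Y \<omega>) \<partial>M) \<le> (\<integral>\<^sup>+\<omega>. ennreal (\<phi> \<omega> * \<bar>q\<bar> + c * Z \<omega>) \<partial>M)"
      by (rule nn_integral_mono_AE) (use pt2 in \<open>auto intro: ennreal_leI elim!: eventually_mono\<close>)
    also have "\<dots> = ennreal (integral\<^sup>L M (\<lambda>\<omega>. \<phi> \<omega> * \<bar>q\<bar> + c * Z \<omega>))"
      by (rule nn_integral_eq_integral[OF bi]) (use nn c0 in \<open>auto simp: Z_def\<close>)
    finally show ?thesis by (simp add: order_le_less_trans)
  qed
  have nf: "(\<integral>\<^sup>+\<omega>. ennreal (- (\<phi> \<omega> * Y \<omega>)) \<partial>M) < \<infinity>"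
  proof (rule ccontr)
    assume "\<not> ?thesis"
    then have inf: "(\<integral>\<^sup>+\<omega>. ennreal (- (\<phi> \<omega> * Y \<omega>)) \<partial>M) = \<infinity>" by (simp add: less_top[symmetric])
    obtain a where a: "(\<integral>\<^sup>+\<omega>. ennreal (\<phi> \<omega> * Y \<omega>) \<partial>M) = ennreal a" "0 \<le> a" using pf
      by (cases "(\<integral>\<^sup>+\<omega>. ennreal (\<phi> \<omega> * Y \<omega>) \<partial>M)") auto
    have "ext_expect M (\<lambda>\<omega>. \<phi> \<omega> * Y \<omega>) = - \<infinity>"
      unfolding ext_expect_def inf a using a(2) by simp
    then show False using x0 by simp
  qed
  have YI: "integrable M (\<lambda>\<omega>. \<phi> \<omega> * Y \<omega>)"
    unfolding integrable_iff_bounded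
  proof
    show "(\<lambda>\<omega>. \<phi> \<omega> * Y \<omega>) \<in> borel_measurable M" by measurable
    have "(\<integral>\<^sup>+\<omega>. ennreal (norm (\<phi> \<omega> * Y \<omega>)) \<partial>M) =
      (\<integral>\<^sup>+\<omega>. ennreal (\<phi> \<omega> * Y \<omega>) \<partial>M) + (\<integral>\<^sup>+\<omega>. ennreal (- (\<phi> \<omega> * Y \<omega>)) \<partial>M)"
      unfolding real_norm_def ennreal_abs_split
      by (rule nn_integral_add; measurable)
    then show "(\<integral>\<^sup>+\<omega>. ennreal (norm (\<phi> \<omega> * Y \<omega>)) \<partial>M) < \<infinity>" using pf nf by simp
  qed
  have "ereal x0 \<le> ereal (integral\<^sup>L M (\<lambda>\<omega>. \<phi> \<omega> * Y \<omega>))"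
    using x0 ext_expect_integrable[OF YI] by simp
  also have "integral\<^sup>L M (\<lambda>\<omega>. \<phi> \<omega> * Y \<omega>) \<le> integral\<^sup>L M (\<lambda>\<omega>. \<phi> \<omega> * q + c * Z \<omega>)"
    by (rule integral_mono_AE[OF YI _ pt]) (use \<phi>i Zi in auto)
  also have "integral\<^sup>L M (\<lambda>\<omega>. \<phi> \<omega> * q + c * Z \<omega>) = integral\<^sup>L M (\<lambda>\<omega>. \<phi> \<omega> * q) + integral\<^sup>L M (\<lambda>\<omega>. c * Z \<omega>)"
    by (rule Bochner_Integration.integral_add) (use \<phi>i Zi in auto)
  also have "\<dots> = q + c * (J - (1-p) * q)"
    using \<phi>1 ZI by simp
  also have "q + c * (J - (1-p) * q) = c * J"
  proof -
    have "c * ((1-p) * q) = q" using c1 by (simp add: mult.assoc[symmetric])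
    then show ?thesis by (simp add: right_diff_distrib)
  qed
  finally show ?thesis using True by (simp add: ES_def J_def c_def)
qed

lemma ES_cong:
  assumes "\<And>\<omega>. \<omega> \<in> space M \<Longrightarrow> Y \<omega> = Y' \<omega>"
  shows "ES M p Y = ES M p Y'"
proof -
  have "VaR M u Y = VaR M u Y'" for u
    unfolding VaR_def using assms by (metis (mono_tags, lifting) Collect_cong)
  then show ?thesis unfolding ES_def by simp
qed

lemma ES_two_point:
  assumes P: "prob_space M" and A: "A \<in> sets M" and p: "0 < p" "p < 1"
    and a: "measure M A < 1 - p" and D: "0 \<le> D"
  shows "ES M p (\<lambda>\<omega>. - K + D * indicator A \<omega>) = ereal (D * measure M A / (1-p) - K)"
proof -
  interpret prob_space M by fact
  define Y where "Y = (\<lambda>\<omega>. - K + D * indicator A \<omega> :: real)"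
  have Ym[measurable]: "Y \<in> borel_measurable M" unfolding Y_def using A by measurable
  have up: "VaR M u Y \<le> - K + D" if "0 < u" "u < 1" for u
  proof -
    have "{\<omega>\<in>space M. Y \<omega> \<le> - K + D} = space M" using D by (auto simp: Y_def indicator_def)
    then show ?thesis using VaR_le_iff[OF P Ym that] that by (simp add: prob_space)
  qed
  have lo: "- K \<le> VaR M u Y" if "0 < u" "u < 1" for u
  proof (rule ccontr)
    assume "\<not> ?thesis"
    then have e: "{\<omega>\<in>space M. Y \<omega> \<le> VaR M u Y} = {}" using D by (auto simp: Y_def indicator_def)
    have "u \<le> measure M {\<omega>\<in>space M. Y \<omega> \<le> VaR M u Y}" using VaR_le_iff[OF P Ym that, of "VaR M u Y"] by simp
    then show False using that by (simp add: e)
  qed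
  have int: "set_integrable lborel {p<..<1} (\<lambda>u. VaR M u Y)"
  proof (rule set_integrable_bdd[where B="\<bar>K\<bar> + \<bar>D\<bar>"])
    show "set_borel_measurable lborel {p<..<1} (\<lambda>u. VaR M u Y)"
      using VaR_set_meas[OF P Ym] p by simp
    fix u assume "u \<in> {p<..<1::real}"
    then have "- K \<le> VaR M u Y" "VaR M u Y \<le> - K + D" using up lo p by auto
    then show "\<bar>VaR M u Y\<bar> \<le> \<bar>K\<bar> + \<bar>D\<bar>" by linarith
  qed
  have q: "VaR M p Y = - K"
  proof (rule antisym)
    have "space M - A \<subseteq> {\<omega>\<in>space M. Y \<omega> \<le> - K}" by (auto simp: Y_def)
    then have "measure M (space M - A) \<le> measure M {\<omega>\<in>space M. Y \<omega> \<le> - K}"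
      by (intro finite_measure_mono) auto
    moreover have "measure M (space M - A) = 1 - measure M A" using A by (simp add: prob_compl)
    ultimately show "VaR M p Y \<le> - K" using VaR_le_iff[OF P Ym p, of "- K"] a by simp
    show "- K \<le> VaR M p Y" using lo p by simp
  qed
  have "(\<integral>\<^sup>+\<omega>. ennreal (Y \<omega> - VaR M p Y) \<partial>M) = (\<integral>\<^sup>+\<omega>. ennreal D * indicator A \<omega> \<partial>M)"
    unfolding q by (intro nn_integral_cong) (auto simp: Y_def indicator_def)
  also have "\<dots> = ennreal D * emeasure M A" using A by (simp add: nn_integral_cmult_indicator)
  also have "\<dots> = ennreal (D * measure M A)" using D by (simp add: emeasure_eq_measure ennreal_mult)
  finally have e: "ennreal (D * measure M A) = ennreal ((LINT u:{p<..<1}|lborel. VaR M u Y) - (1-p) * VaR M p Y)"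
    using ES_key(1)[OF P Ym p int] by simp
  have J: "(LINT u:{p<..<1}|lborel. VaR M u Y) = D * measure M A - (1-p) * K"
    using e ES_key(2)[OF P Ym p int] D q by (simp add: ennreal_inj)
  have "ES M p Y = ereal ((1 / (1 - p)) * (D * measure M A - (1-p) * K))"
    using int J by (simp add: ES_def)
  also have "(1 / (1 - p)) * (D * measure M A - (1-p) * K) = D * measure M A / (1-p) - K"
    using p by (simp add: field_simps)
  finally show ?thesis by (simp add: Y_def)
qed

lemma small_set:
  fixes X :: "'a \<Rightarrow> real"
  assumes P: "prob_space M" and Xm[measurable]: "X \<in> borel_measurable M"
    and noatom: "\<And>t. measure M {\<omega>\<in>space M. X \<omega> = t} = 0"
    and S0[measurable]: "S0 \<in> sets borel"
    and tau: "0 < \<tau>" "\<tau> < measure M {\<omega>\<in>space M. X \<omega> \<in> S0}"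
  shows "\<exists>t. measure M {\<omega>\<in>space M. X \<omega> \<in> S0 \<and> X \<omega> \<le> t} = \<tau>"
proof -
  interpret prob_space M by fact
  interpret N: real_distribution "distr M borel X" by simp
  define F where "F t = measure M {\<omega>\<in>space M. X \<omega> \<le> t}" for t
  define G where "G t = measure M {\<omega>\<in>space M. X \<omega> \<in> S0 \<and> X \<omega> \<le> t}" for t
  define P0 where "P0 = measure M {\<omega>\<in>space M. X \<omega> \<in> S0}"
  have Fc: "F = cdf (distr M borel X)" by (rule ext) (simp add: F_def cdf_distr_eq)
  have Fcont: "isCont F t" for t
  proof -
    have "measure (distr M borel X) {t} = measure M (X -` {t} \<inter> space M)"
      by (simp add: measure_distr)
    also have "X -` {t} \<inter> space M = {\<omega>\<in>space M. X \<omega> = t}" by auto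
    finally show ?thesis unfolding Fc using N.isCont_cdf noatom by simp
  qed
  have Gle: "G s \<le> G t \<and> G t \<le> G s + (F t - F s)" if "s \<le> t" for s t
  proof
    show "G s \<le> G t" unfolding G_def using that by (intro finite_measure_mono) auto
    have "G t \<le> measure M ({\<omega>\<in>space M. X \<omega> \<in> S0 \<and> X \<omega> \<le> s} \<union>
              ({\<omega>\<in>space M. X \<omega> \<le> t} - {\<omega>\<in>space M. X \<omega> \<le> s}))"
      unfolding G_def by (intro finite_measure_mono) auto
    also have "\<dots> \<le> G s + measure M ({\<omega>\<in>space M. X \<omega> \<le> t} - {\<omega>\<in>space M. X \<omega> \<le> s})"
      unfolding G_def by (intro measure_Un_le) auto
    also have "measure M ({\<omega>\<in>space M. X \<omega> \<le> t} - {\<omega>\<in>space M. X \<omega> \<le> s}) = F t - F s"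
      unfolding F_def using that by (intro finite_measure_Diff) auto
    finally show "G t \<le> G s + (F t - F s)" .
  qed
  have GF: "\<bar>G y - G x\<bar> \<le> \<bar>F y - F x\<bar>" for x y
    using Gle[of x y] Gle[of y x] by (cases "x \<le> y") auto
  have Gcont: "isCont G x" for x
  proof -
    have "F \<midarrow>x\<rightarrow> F x" using Fcont[of x] by (simp add: isCont_def)
    then have "G \<midarrow>x\<rightarrow> G x"
      unfolding LIM_eq real_norm_def using GF by (meson le_less_trans)
    then show ?thesis by (simp add: isCont_def)
  qed
  have "(F \<longlongrightarrow> 0) at_bot" unfolding Fc by (rule N.cdf_lim_at_bot)
  then have "eventually (\<lambda>t. F t < \<tau>) at_bot" using tau by (simp add: order_tendstoD(2))
  then obtain t1 where t1: "F t1 < \<tau>" by (meson eventually_at_bot_linorder order_refl)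
  have "G t1 \<le> F t1" unfolding G_def F_def by (intro finite_measure_mono) auto
  with t1 have Gt1: "G t1 \<le> \<tau>" by simp
  have "(F \<longlongrightarrow> 1) at_top" unfolding Fc by (rule N.cdf_lim_at_top_prob)
  then have "eventually (\<lambda>t. 1 - (P0 - \<tau>) < F t) at_top" using tau
    by (intro order_tendstoD(1)) (auto simp: P0_def)
  then obtain t2 where t2: "1 - (P0 - \<tau>) < F t2" by (meson eventually_at_top_linorder order_refl)
  have "P0 \<le> measure M ({\<omega>\<in>space M. X \<omega> \<in> S0 \<and> X \<omega> \<le> t2} \<union> (space M - {\<omega>\<in>space M. X \<omega> \<le> t2}))"
    unfolding P0_def by (intro finite_measure_mono) auto
  also have "\<dots> \<le> G t2 + measure M (space M - {\<omega>\<in>space M. X \<omega> \<le> t2})"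
    unfolding G_def by (intro measure_Un_le) auto
  also have "measure M (space M - {\<omega>\<in>space M. X \<omega> \<le> t2}) = 1 - F t2"
    unfolding F_def by (intro prob_compl) auto
  finally have Gt2: "\<tau> \<le> G t2" using t2 by simp
  have "t1 \<le> t2"
  proof (rule ccontr)
    assume "\<not> t1 \<le> t2"
    then have "G t2 \<le> G t1" using Gle[of t2 t1] by simp
    then show False using t1 t2 Gt2 \<open>G t1 \<le> F t1\<close> by simp
  qed
  then obtain t where "G t = \<tau>"
    using IVT'[of G t1 \<tau> t2] Gt1 Gt2 continuous_at_imp_continuous_on Gcont by blast
  then show ?thesis unfolding G_def by blast
qed

lemma integrable_expect_defined:
  assumes "integrable M f"
  shows "expect_defined M f"
proof -
  have fin: "(\<integral>\<^sup>+x. ennreal (norm (f x)) \<partial>M) < \<infinity>" using assms by (simp add: integrable_iff_bounded)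
  have "(\<integral>\<^sup>+x. ennreal (f x) \<partial>M) \<le> (\<integral>\<^sup>+x. ennreal (norm (f x)) \<partial>M)"
    by (intro nn_integral_mono) (auto intro: ennreal_leI)
  with fin have a: "(\<integral>\<^sup>+x. ennreal (f x) \<partial>M) < \<infinity>" by auto
  then show ?thesis unfolding expect_defined_def using assms by auto
qed

lemma no_min:
  fixes X :: "'a \<Rightarrow> real" and \<gamma> :: "real \<Rightarrow> real"
  assumes P: "prob_space M" and p: "0 < p" "p < 1"
    and Xm[measurable]: "X \<in> borel_measurable M"
    and dist: "\<exists>f. distributed M lborel X (\<lambda>x. ennreal (f x)) \<and>
              (\<forall>x\<in>dist_support M X. f x > 0)"
    and \<gamma>c: "continuous_on UNIV \<gamma>" and \<gamma>pos: "\<forall>x. \<gamma> x > 0"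
    and \<gamma>i: "integrable M (\<lambda>\<omega>. \<gamma> (X \<omega>))" and \<gamma>1: "(\<integral>\<omega>. \<gamma> (X \<omega>) \<partial>M) = 1"
    and big: "\<not> esssup M (\<lambda>\<omega>. ereal (\<gamma> (X \<omega>))) \<le> ereal (1 / (1 - p))"
  shows "\<exists>h\<in>G_cm M X \<gamma> x0. ES M p (\<lambda>\<omega>. h (X \<omega>)) < ereal e"
proof -
  interpret prob_space M by fact
  have \<gamma>m[measurable]: "\<gamma> \<in> borel_measurable borel" using \<gamma>c by (rule borel_measurable_continuous_onI)
  define c where "c = 1 / (1 - p)"
  have c1: "c * (1 - p) = 1" and c0: "0 < c" using p by (auto simp: c_def)
  obtain z where z: "ereal c < z" "z < esssup M (\<lambda>\<omega>. ereal (\<gamma> (X \<omega>)))"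
    using big dense not_le unfolding c_def by metis
  define c' where "c' = real_of_ereal z"
  have zc': "z = ereal c'" unfolding c'_def using z by (cases z) auto
  have cc': "c < c'" using z(1) zc' by simp
  have notAE: "\<not> (AE \<omega> in M. \<gamma> (X \<omega>) \<le> c')"
  proof
    assume "AE \<omega> in M. \<gamma> (X \<omega>) \<le> c'"
    then have "esssup M (\<lambda>\<omega>. ereal (\<gamma> (X \<omega>))) \<le> ereal c'"
      by (intro esssup_I) (auto elim!: eventually_mono)
    then show False using z(2) zc' by simp
  qed
  define S0 where "S0 = {x. c' < \<gamma> x}"
  have S0m[measurable]: "S0 \<in> sets borel" unfolding S0_def by measurable
  have "emeasure M {\<omega>\<in>space M. X \<omega> \<in> S0} \<noteq> 0"
  proof
    assume "emeasure M {\<omega>\<in>space M. X \<omega> \<in> S0} = 0"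
    then have "AE \<omega> in M. \<gamma> (X \<omega>) \<le> c'"
      by (subst AE_iff_measurable[where N="{\<omega>\<in>space M. X \<omega> \<in> S0}"]) (auto simp: S0_def not_le)
    then show False using notAE by simp
  qed
  then have P0: "0 < measure M {\<omega>\<in>space M. X \<omega> \<in> S0}"
    by (simp add: emeasure_eq_measure zero_less_measure_iff)
  have noatom: "measure M {\<omega>\<in>space M. X \<omega> = t} = 0" for t
  proof -
    obtain f where f: "distributed M lborel X (\<lambda>x. ennreal (f x))" using dist by blast
    then have fd: "distr M lborel X = density lborel (\<lambda>x. ennreal (f x))"
      and fm: "(\<lambda>x. ennreal (f x)) \<in> borel_measurable lborel" and Xl: "X \<in> measurable M lborel"
      by (auto simp: distributed_def)
    have "emeasure M {\<omega>\<in>space M. X \<omega> = t} = emeasure (distr M lborel X) {t}"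
      using Xl by (subst emeasure_distr) (auto intro!: arg_cong2[where f=emeasure])
    also have "\<dots> = (\<integral>\<^sup>+x\<in>{t}. ennreal (f x) \<partial>lborel)"
      unfolding fd using fm by (simp add: emeasure_density)
    also have "\<dots> = (\<integral>\<^sup>+x. 0 \<partial>(lborel::real measure))"
    proof -
      have "AE x in lborel. ennreal (f x) * indicator {t} x = 0"
        using AE_lborel_singleton[of t] by (auto elim!: eventually_mono)
      then show ?thesis by (rule nn_integral_cong_AE)
    qed
    finally show ?thesis by (simp add: measure_def)
  qed
  define \<tau> where "\<tau> = min (measure M {\<omega>\<in>space M. X \<omega> \<in> S0}) (1 - p) / 2"
  have tau: "0 < \<tau>" "\<tau> < measure M {\<omega>\<in>space M. X \<omega> \<in> S0}" "\<tau> < 1 - p"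
    using P0 p by (auto simp: \<tau>_def)
  obtain t where t: "measure M {\<omega>\<in>space M. X \<omega> \<in> S0 \<and> X \<omega> \<le> t} = \<tau>"
    using small_set[OF P Xm noatom S0m tau(1,2)] by blast
  define A where "A = {\<omega>\<in>space M. X \<omega> \<in> S0 \<and> X \<omega> \<le> t}"
  define S where "S = {x. c' < \<gamma> x \<and> x \<le> t}"
  have Am[measurable]: "A \<in> sets M" unfolding A_def by measurable
  have Sm[measurable]: "S \<in> sets borel" unfolding S_def by measurable
  have SA: "indicator S (X \<omega>) = (indicator A \<omega> :: real)" if "\<omega> \<in> space M" for \<omega>
    using that by (auto simp: indicator_def S_def A_def S0_def)
  define a where "a = measure M A"
  have a: "0 < a" "a < 1 - p" using t tau by (auto simp: a_def A_def)
  define b where "b = (\<integral>\<omega>. \<gamma> (X \<omega>) * indicator A \<omega> \<partial>M)"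
  have bi: "integrable M (\<lambda>\<omega>. \<gamma> (X \<omega>) * indicator A \<omega>)"
    by (rule integrable_real_mult_indicator[OF Am \<gamma>i])
  have "(\<integral>\<omega>. c' * indicator A \<omega> \<partial>M) \<le> b" unfolding b_def
    by (rule integral_mono[OF integrable_real_mult_indicator[OF Am integrable_const] bi])
       (auto simp: indicator_def A_def S0_def)
  then have bge: "c' * a \<le> b" by (simp add: a_def)
  have c'0: "0 < c'" using cc' c0 by simp
  have b0: "0 < b" using bge c'0 a(1) by (smt (verit) mult_pos_pos)
  define \<theta> where "\<theta> = a / (b * (1 - p))"
  have "a < c' * a * (1 - p)"
  proof -
    have "1 < c' * (1 - p)" using cc' c1 p by (smt (verit) mult_strict_right_mono)
    then have "a * 1 < a * (c' * (1 - p))" using a(1) by (intro mult_strict_left_mono) auto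
    then show ?thesis by (simp add: algebra_simps)
  qed
  also have "c' * a * (1 - p) \<le> b * (1 - p)" using bge p by (intro mult_right_mono) auto
  finally have ab: "a < b * (1 - p)" .
  have th: "0 < \<theta>" "\<theta> < 1" using ab a b0 p by (auto simp: \<theta>_def)
  define K where "K = \<bar>x0\<bar> + (\<bar>x0\<bar> + \<bar>e\<bar> + 1) / (1 - \<theta>)"
  have Kge: "\<bar>x0\<bar> \<le> K" using th by (auto simp: K_def)
  define D where "D = (x0 + K) / b"
  have D0: "0 \<le> D" using Kge b0 by (auto simp: D_def)
  define h where "h = (\<lambda>x. - K + D * indicator S x)"
  have hm: "h \<in> borel_measurable borel" unfolding h_def by measurable
  have eqf: "\<gamma> (X \<omega>) * h (X \<omega>) = - K * \<gamma> (X \<omega>) + D * (\<gamma> (X \<omega>) * indicator A \<omega>)"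
    if "\<omega> \<in> space M" for \<omega>
    using SA[OF that] by (simp add: h_def algebra_simps)
  have hi: "integrable M (\<lambda>\<omega>. \<gamma> (X \<omega>) * h (X \<omega>))"
    by (subst Bochner_Integration.integrable_cong[OF refl eqf]) (use \<gamma>i bi in auto)
  have hI: "(\<integral>\<omega>. \<gamma> (X \<omega>) * h (X \<omega>) \<partial>M) = x0"
  proof -
    have "(\<integral>\<omega>. \<gamma> (X \<omega>) * h (X \<omega>) \<partial>M) = (\<integral>\<omega>. - K * \<gamma> (X \<omega>) + D * (\<gamma> (X \<omega>) * indicator A \<omega>) \<partial>M)"
      by (rule Bochner_Integration.integral_cong[OF refl eqf])
    also have "\<dots> = - K * 1 + D * b"
      using \<gamma>i bi \<gamma>1 by (simp add: b_def)
    also have "\<dots> = x0" using b0 by (simp add: D_def)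
    finally show ?thesis .
  qed
  have hG: "h \<in> G_cm M X \<gamma> x0"
    unfolding G_cm_def using hm integrable_expect_defined[OF hi] ext_expect_integrable[OF hi] hI by simp
  have "ES M p (\<lambda>\<omega>. h (X \<omega>)) = ES M p (\<lambda>\<omega>. - K + D * indicator A \<omega>)"
    by (rule ES_cong) (simp add: h_def SA)
  also have "\<dots> = ereal (D * a / (1 - p) - K)"
    unfolding a_def by (rule ES_two_point[OF P Am p _ D0]) (use a in \<open>simp add: a_def\<close>)
  also have "D * a / (1 - p) - K < e"
  proof -
    have "D * a / (1 - p) = (x0 + K) * \<theta>" using b0 p by (simp add: D_def \<theta>_def field_simps)
    then have e1: "D * a / (1 - p) - K = x0 * \<theta> - K * (1 - \<theta>)" by (simp add: algebra_simps)
    have e2: "K * (1 - \<theta>) = \<bar>x0\<bar> * (1 - \<theta>) + (\<bar>x0\<bar> + \<bar>e\<bar> + 1)"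
      using th by (simp add: K_def field_simps)
    have e3: "x0 * \<theta> \<le> \<bar>x0\<bar> * \<theta>" using th by (intro mult_right_mono) auto
    have e4: "\<bar>x0\<bar> * \<theta> \<le> \<bar>x0\<bar>" using th by (intro mult_left_le) auto
    have e5: "0 \<le> \<bar>x0\<bar> * (1 - \<theta>)" using th by simp
    show ?thesis using e1 e2 e3 e4 e5 by linarith
  qed
  finally show ?thesis using hG by (intro bexI[of _ h]) simp_all
qed

theorem proposition6:
  fixes M :: "'a measure" and X :: "'a \<Rightarrow> real" and \<gamma> :: "real \<Rightarrow> real"
    and p x0 :: real
  assumes "prob_space M" and "atomless M"
    and "p \<in> {0<..<1}"
    and "X \<in> borel_measurable M" and "\<forall>\<omega>\<in>space M. X \<omega> \<ge> 0"
    and "\<exists>f. distributed M lborel X (\<lambda>x. ennreal (f x)) \<and>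
              (\<forall>x\<in>dist_support M X. f x > 0)"
    and "continuous_on UNIV \<gamma>" and "\<forall>x. \<gamma> x > 0"
    and "integrable M (\<lambda>\<omega>. \<gamma> (X \<omega>))" and "(\<integral>\<omega>. \<gamma> (X \<omega>) \<partial>M) = 1"
    and "integrable M (\<lambda>\<omega>. \<gamma> (X \<omega>) * X \<omega>)"
  shows "((\<exists>g. is_ES_minimizer M p X \<gamma> x0 g) \<longleftrightarrow>
            esssup M (\<lambda>\<omega>. ereal (\<gamma> (X \<omega>))) \<le> ereal (1 / (1 - p)))
       \<and> (esssup M (\<lambda>\<omega>. ereal (\<gamma> (X \<omega>))) \<le> ereal (1 / (1 - p)) \<longrightarrow>
            is_ES_minimizer M p X \<gamma> x0 (\<lambda>_. x0))"
proof -
  note P = assms(1)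
  interpret prob_space M by fact
  have p: "0 < p" "p < 1" using assms(3) by auto
  note Xm[measurable] = assms(4)
  have \<gamma>m[measurable]: "\<gamma> \<in> borel_measurable borel" using assms(7) by (rule borel_measurable_continuous_onI)
  have suff: "is_ES_minimizer M p X \<gamma> x0 (\<lambda>_. x0)"
    if ess: "esssup M (\<lambda>\<omega>. ereal (\<gamma> (X \<omega>))) \<le> ereal (1 / (1 - p))"
  proof -
    have ci: "integrable M (\<lambda>\<omega>. \<gamma> (X \<omega>) * x0)" using assms(9) by simp
    have cI: "(\<integral>\<omega>. \<gamma> (X \<omega>) * x0 \<partial>M) = x0" using assms(10) by simp
    have cG: "(\<lambda>_. x0) \<in> G_cm M X \<gamma> x0"
      unfolding G_cm_def using integrable_expect_defined[OF ci] ext_expect_integrable[OF ci] cI assms(10) by simp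
    have "ES M p (\<lambda>\<omega>. x0) = ES M p (\<lambda>\<omega>. - (- x0) + 0 * indicator {} \<omega>)"
      by (rule ES_cong) simp
    also have "\<dots> = ereal (0 * measure M {} / (1 - p) - (- x0))"
      by (rule ES_two_point[OF P sets.empty_sets p]) (use p in auto)
    finally have cES: "ES M p (\<lambda>\<omega>. x0) = ereal x0" by simp
    have le: "AE \<omega> in M. \<gamma> (X \<omega>) \<le> 1 / (1 - p)"
      using esssup_AE[of "\<lambda>\<omega>. ereal (\<gamma> (X \<omega>))" M] ess
      by (auto elim!: eventually_mono dest: order_trans)
    have "ES M p (\<lambda>\<omega>. x0) \<le> ES M p (\<lambda>\<omega>. h (X \<omega>))" if hG: "h \<in> G_cm M X \<gamma> x0" for h
    proof -
      have hm[measurable]: "h \<in> borel_measurable borel" using hG by (simp add: G_cm_def)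
      have x0: "ereal x0 \<le> ext_expect M (\<lambda>\<omega>. \<gamma> (X \<omega>) * h (X \<omega>))" using hG by (simp add: G_cm_def)
      have "ereal x0 \<le> ES M p (\<lambda>\<omega>. h (X \<omega>))"
        by (rule ES_ge[OF P _ _ p le _ assms(9,10) x0]) (use assms(8) in \<open>auto intro: less_imp_le\<close>)
      then show ?thesis using cES by simp
    qed
    then show ?thesis using cG unfolding is_ES_minimizer_def by blast
  qed
  have nec: "esssup M (\<lambda>\<omega>. ereal (\<gamma> (X \<omega>))) \<le> ereal (1 / (1 - p))"
    if "is_ES_minimizer M p X \<gamma> x0 g" for g
  proof (rule ccontr)
    assume big: "\<not> ?thesis"
    have "ES M p (\<lambda>\<omega>. g (X \<omega>)) \<le> ereal e" for e
    proof -
      obtain h where h: "h \<in> G_cm M X \<gamma> x0" "ES M p (\<lambda>\<omega>. h (X \<omega>)) < ereal e"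
        using no_min[OF P p Xm assms(6,7,8,9,10) big, of x0 e] by blast
      then have "ES M p (\<lambda>\<omega>. g (X \<omega>)) \<le> ES M p (\<lambda>\<omega>. h (X \<omega>))"
        using that unfolding is_ES_minimizer_def by blast
      then show ?thesis using h(2) by simp
    qed
    then have "ES M p (\<lambda>\<omega>. g (X \<omega>)) = - \<infinity>" by (rule ereal_bot)
    then show False by (simp add: ES_def split: if_splits)
  qed
  show ?thesis using suff nec by blast
qed

end
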